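(* Let $S$ be a numerical semigroup with minimal generators $g_1<\dots<g_\nu$ whose Apéry set is $\gamma$-rectangular. Then there exist non-negative integers $\lambda_{i,j}$ ($2\le i\le\nu$, $1\le j\le\nu$) with $$(\gamma_i+1)g_i=\lambda_{i,1}g_1+\lambda_{i,2}g_2+\dots+\lambda_{i,\nu}g_\nu\quad (i=2,\dots,\nu),$$ and a permutation $\sigma$ of $\{1,\dots,\nu\}$ with $\sigma(1)=1$ such that $\lambda_{\sigma(i),\sigma(j)}=0$ whenever $2\le i\le j\le\nu$.
   Context: A numerical semigroup is a submonoid $S$ of $(\mathbb N,+)$ with finite complement in $\mathbb N$; $g_1<\dots<g_\nu$ is its minimal system of generators and $m=g_1$ its multiplicity. $\mathrm{Ap}(S)=\{s\in S: s-m\notin S\}$. A representation of $s\in S$ is an expression $s=\sum_{i=1}^\nu\lambda_ig_i$, $\lambda_i\in\mathbb N$; $\mathrm{ord}(s)$ is the maximum of $\sum\lambda_i$ over all representations, and a representation is maximal if $\sum\lambda_i=\mathrm{ord}(s)$. For $i=2,\dots,\nu$, $\gamma_i=\max\{h\in\mathbb N: hg_i\in\mathrm{Ap}(S),\ \mathrm{ord}(hg_i)=h,\ \text{and } hg_i \text{ has a unique maximal representation}\}$. $\mathrm{Ap}(S)$ is $\gamma$-rectangular if $\mathrm{Ap}(S)=\{\sum_{i=2}^\nu\lambda_ig_i: 0\le\lambda_i\le\gamma_i\}$. *)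

theory Defs
  imports Main
begin

definition numerical_semigroup :: "nat set \<Rightarrow> bool" where
  "numerical_semigroup S \<longleftrightarrow>
     0 \<in> S \<and> (\<forall>a\<in>S. \<forall>b\<in>S. a + b \<in> S) \<and> finite (UNIV - S)"

definition coeffs :: "nat \<Rightarrow> (nat \<Rightarrow> nat) set" where
  "coeffs nu = {l. \<forall>i. i \<notin> {1..nu} \<longrightarrow> l i = 0}"

definition reps :: "(nat \<Rightarrow> nat) \<Rightarrow> nat \<Rightarrow> nat \<Rightarrow> (nat \<Rightarrow> nat) set" where
  "reps g nu s = {l \<in> coeffs nu. s = (\<Sum>i=1..nu. l i * g i)}"

definition min_gens :: "nat set \<Rightarrow> (nat \<Rightarrow> nat) \<Rightarrow> nat \<Rightarrow> bool" where
  "min_gens S g nu \<longleftrightarrow>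
     (\<forall>i\<in>{1..nu}. \<forall>j\<in>{1..nu}. i < j \<longrightarrow> g i < g j) \<and>
     S = {s. reps g nu s \<noteq> {}} \<and>
     (\<forall>k\<in>{1..nu}. \<not> (\<exists>l\<in>coeffs nu. l k = 0 \<and> g k = (\<Sum>i=1..nu. l i * g i)))"

definition apery :: "nat set \<Rightarrow> nat \<Rightarrow> nat set" where
  "apery S m = {s \<in> S. \<not> (m \<le> s \<and> s - m \<in> S)}"

definition ord_s :: "(nat \<Rightarrow> nat) \<Rightarrow> nat \<Rightarrow> nat \<Rightarrow> nat" where
  "ord_s g nu s = Max ((\<lambda>l. \<Sum>i=1..nu. l i) ` reps g nu s)"

definition max_reps :: "(nat \<Rightarrow> nat) \<Rightarrow> nat \<Rightarrow> nat \<Rightarrow> (nat \<Rightarrow> nat) set" where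
  "max_reps g nu s = {l \<in> reps g nu s. (\<Sum>i=1..nu. l i) = ord_s g nu s}"

definition gamma :: "nat set \<Rightarrow> (nat \<Rightarrow> nat) \<Rightarrow> nat \<Rightarrow> nat \<Rightarrow> nat" where
  "gamma S g nu i = Max {h. h * g i \<in> apery S (g 1) \<and> ord_s g nu (h * g i) = h
                              \<and> card (max_reps g nu (h * g i)) = 1}"

definition gamma_rectangular :: "nat set \<Rightarrow> (nat \<Rightarrow> nat) \<Rightarrow> nat \<Rightarrow> bool" where
  "gamma_rectangular S g nu \<longleftrightarrow>
     apery S (g 1) = {(\<Sum>i=2..nu. l i * g i) | l. \<forall>i\<in>{2..nu}. l i \<le> gamma S g nu i}"

end

theory Submission
  imports Defs "HOL-Library.FuncSet" Complex_Main
begin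

locale NS =
  fixes S :: "nat set" and g :: "nat \<Rightarrow> nat" and nu :: nat
  assumes ns: "numerical_semigroup S" and mg: "min_gens S g nu" and rect: "gamma_rectangular S g nu"
begin

definition F :: "(nat \<Rightarrow> nat) \<Rightarrow> nat" where "F l = (\<Sum>i=1..nu. l i * g i)"

lemma S_eq: "S = {s. \<exists>l\<in>coeffs nu. s = F l}"
  using mg unfolding min_gens_def reps_def F_def by auto

lemma S_iff: "s \<in> S \<longleftrightarrow> (\<exists>l\<in>coeffs nu. s = F l)"
  using S_eq by auto

lemma nu_pos: "nu \<ge> 1"
proof (rule ccontr)
  assume "\<not> nu \<ge> 1"
  hence "nu = 0" by simp
  hence "S \<subseteq> {0}" unfolding S_eq F_def by auto
  hence "UNIV - {0::nat} \<subseteq> UNIV - S" by auto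
  moreover have "infinite (UNIV - {0::nat})" by simp
  ultimately show False using ns unfolding numerical_semigroup_def using finite_subset by blast
qed

lemma g1_pos: "g 1 > 0"
proof (rule ccontr)
  assume "\<not> g 1 > 0"
  hence "g 1 = 0" by simp
  moreover have "(\<lambda>_. 0::nat) \<in> coeffs nu" unfolding coeffs_def by simp
  ultimately show False using mg nu_pos unfolding min_gens_def by force
qed

lemma g_mono: "i \<in> {1..nu} \<Longrightarrow> j \<in> {1..nu} \<Longrightarrow> i < j \<Longrightarrow> g i < g j"
  using mg unfolding min_gens_def by blast

lemma g_ge1: "i \<in> {1..nu} \<Longrightarrow> g 1 \<le> g i"
  using g_mono[of 1 i] nu_pos by (cases "i = 1") auto

lemma g_pos: "i \<in> {1..nu} \<Longrightarrow> g i > 0"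
  using g_ge1 g1_pos by (meson less_le_trans)

lemma g_inj: "i \<in> {1..nu} \<Longrightarrow> j \<in> {1..nu} \<Longrightarrow> i \<noteq> j \<Longrightarrow> g i \<noteq> g j"
  using g_mono by (metis less_irrefl linorder_neqE_nat)

lemma F_add: "F (\<lambda>i. a i + b i) = F a + F b"
  unfolding F_def by (simp add: algebra_simps sum.distrib)

lemma F_diff: assumes "\<And>i. b i \<le> a i" shows "F (\<lambda>i. a i - b i) = F a - F b"
proof -
  have "F a = F (\<lambda>i. (a i - b i) + b i)" using assms by (simp add: le_add_diff_inverse2)
  also have "\<dots> = F (\<lambda>i. a i - b i) + F b" by (rule F_add)
  finally show ?thesis by simp
qed

lemma F_unit: "j \<in> {1..nu} \<Longrightarrow> F (\<lambda>i. if i = j then c else 0) = c * g j"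
proof -
  assume j: "j \<in> {1..nu}"
  have "F (\<lambda>i. if i = j then c else 0) = (\<Sum>i=1..nu. if i = j then c * g j else 0)"
    unfolding F_def by (rule sum.cong) auto
  also have "\<dots> = c * g j" using j by (simp add: sum.delta)
  finally show ?thesis .
qed

lemma unit_coeffs: "j \<in> {1..nu} \<Longrightarrow> (\<lambda>i. if i = j then c else 0) \<in> coeffs nu"
  unfolding coeffs_def by auto

lemma coeffs_add: "a \<in> coeffs nu \<Longrightarrow> b \<in> coeffs nu \<Longrightarrow> (\<lambda>i. a i + b i) \<in> coeffs nu"
  unfolding coeffs_def by auto

lemma coeffs_diff: "a \<in> coeffs nu \<Longrightarrow> (\<lambda>i. a i - b i) \<in> coeffs nu"
  unfolding coeffs_def by auto

lemma coeffs_zero: "l \<in> coeffs nu \<Longrightarrow> i \<notin> {1..nu} \<Longrightarrow> l i = 0"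
  unfolding coeffs_def by auto

lemma F_mono: assumes "\<And>i. b i \<le> a i" shows "F b \<le> F a"
  unfolding F_def by (rule sum_mono) (use assms in auto)

lemma coeff_le: assumes "l \<in> coeffs nu" shows "l i \<le> F l"
proof (cases "i \<in> {1..nu}")
  case True
  have "l i \<le> l i * g i" using g_pos[OF True] by simp
  also have "\<dots> \<le> F l" unfolding F_def by (rule member_le_sum) (use True in auto)
  finally show ?thesis .
next
  case False then show ?thesis using coeffs_zero[OF assms] by simp
qed

lemma S_add: "a \<in> S \<Longrightarrow> b \<in> S \<Longrightarrow> a + b \<in> S"
  using ns unfolding numerical_semigroup_def by blast

abbreviation "gm i \<equiv> gamma S g nu i"

definition box :: "(nat \<Rightarrow> nat) set" where
  "box = {l \<in> coeffs nu. l 1 = 0 \<and> (\<forall>i\<in>{2..nu}. l i \<le> gm i)}"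

definition boxI :: "nat set \<Rightarrow> (nat \<Rightarrow> nat) set" where
  "boxI I = {l \<in> box. \<forall>i. i \<notin> I \<longrightarrow> l i = 0}"

definition ext :: "nat set \<Rightarrow> (nat \<Rightarrow> nat) \<Rightarrow> nat \<Rightarrow> nat" where
  "ext I p = (\<lambda>i. if i \<in> I then p i else 0)"

lemma boxI_eq: assumes "I \<subseteq> {2..nu}"
  shows "boxI I = ext I ` PiE I (\<lambda>i. {0..gm i})"
proof
  show "boxI I \<subseteq> ext I ` PiE I (\<lambda>i. {0..gm i})"
  proof
    fix l assume l: "l \<in> boxI I"
    have "l = ext I (restrict l I)" using l unfolding boxI_def ext_def by auto
    moreover have "restrict l I \<in> PiE I (\<lambda>i. {0..gm i})"
      using l assms unfolding boxI_def box_def by auto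
    ultimately show "l \<in> ext I ` PiE I (\<lambda>i. {0..gm i})" by blast
  qed
next
  show "ext I ` PiE I (\<lambda>i. {0..gm i}) \<subseteq> boxI I"
    using assms unfolding boxI_def box_def ext_def coeffs_def by (auto simp: PiE_def Pi_def)
qed

lemma ext_inj: "inj_on (ext I) (PiE I A)"
proof (rule inj_onI)
  fix p q assume p: "p \<in> PiE I A" and q: "q \<in> PiE I A" and e: "ext I p = ext I q"
  show "p = q"
  proof (rule PiE_ext[OF p q])
    fix x assume "x \<in> I" then show "p x = q x" using fun_cong[OF e, of x] unfolding ext_def by simp
  qed
qed

lemma card_boxI: assumes "I \<subseteq> {2..nu}" shows "card (boxI I) = (\<Prod>i\<in>I. gm i + 1)"
proof -
  have fI: "finite I" using assms finite_subset by blast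
  have "card (boxI I) = card (PiE I (\<lambda>i. {0..gm i}))"
    unfolding boxI_eq[OF assms] by (rule card_image[OF ext_inj])
  also have "\<dots> = (\<Prod>i\<in>I. gm i + 1)" by (simp add: card_PiE[OF fI])
  finally show ?thesis .
qed

lemma finite_boxI: assumes "I \<subseteq> {2..nu}" shows "finite (boxI I)"
proof -
  have fI: "finite I" using assms finite_subset by blast
  show ?thesis unfolding boxI_eq[OF assms] by (rule finite_imageI) (simp add: finite_PiE fI)
qed

lemma box_eq_boxI: "box = boxI {2..nu}"
proof -
  have "\<And>i::nat. \<not> 2 \<le> i \<Longrightarrow> i = 0 \<or> i = 1" by auto
  then show ?thesis unfolding boxI_def box_def coeffs_def by auto
qed

lemma finite_box: "finite box"
  using finite_boxI[of "{2..nu}"] box_eq_boxI by simp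

lemma F_box: assumes "l 1 = 0" shows "F l = (\<Sum>i=2..nu. l i * g i)"
proof -
  have "F l = l 1 * g 1 + (\<Sum>i=Suc 1..nu. l i * g i)"
    unfolding F_def using nu_pos by (simp add: sum.atLeast_Suc_atMost)
  then show ?thesis using assms by (simp add: numeral_2_eq_2)
qed

lemma Ap_eq: "apery S (g 1) = F ` box"
proof -
  have "apery S (g 1) = {(\<Sum>i=2..nu. l i * g i) | l. \<forall>i\<in>{2..nu}. l i \<le> gm i}"
    using rect unfolding gamma_rectangular_def by simp
  also have "\<dots> = F ` box"
  proof
    show "{(\<Sum>i=2..nu. l i * g i) | l. \<forall>i\<in>{2..nu}. l i \<le> gm i} \<subseteq> F ` box"
    proof
      fix x assume "x \<in> {(\<Sum>i=2..nu. l i * g i) | l. \<forall>i\<in>{2..nu}. l i \<le> gm i}"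
      then obtain l where x: "x = (\<Sum>i=2..nu. l i * g i)" and l: "\<forall>i\<in>{2..nu}. l i \<le> gm i" by blast
      define k where "k = ext {2..nu} l"
      have k: "k \<in> box" using l unfolding k_def ext_def box_def coeffs_def by auto
      have "F k = (\<Sum>i=2..nu. k i * g i)" by (rule F_box) (simp add: k_def ext_def)
      also have "\<dots> = x" unfolding x k_def ext_def by (rule sum.cong) auto
      finally show "x \<in> F ` box" using k by force
    qed
  next
    show "F ` box \<subseteq> {(\<Sum>i=2..nu. l i * g i) | l. \<forall>i\<in>{2..nu}. l i \<le> gm i}"
      using F_box unfolding box_def by auto
  qed
  finally show ?thesis .
qed

lemma box_coeffs: "l \<in> box \<Longrightarrow> l \<in> coeffs nu" unfolding box_def by simp

lemma Ap_S: "w \<in> apery S (g 1) \<Longrightarrow> w \<in> S" unfolding apery_def by simp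

lemma F_S: "l \<in> coeffs nu \<Longrightarrow> F l \<in> S" using S_iff by blast

lemma mult_m_S: "k * g 1 \<in> S"
  using F_unit[of 1 k] unit_coeffs[of 1 k] nu_pos F_S by force

lemma Ap_div: assumes "w \<in> apery S (g 1)" "a \<in> S" "b \<in> S" "w = a + b"
  shows "a \<in> apery S (g 1)"
proof -
  have "\<not> (g 1 \<le> a \<and> a - g 1 \<in> S)"
  proof
    assume h: "g 1 \<le> a \<and> a - g 1 \<in> S"
    hence e: "w - g 1 = (a - g 1) + b" using assms by simp
    have "(a - g 1) + b \<in> S" using S_add h assms(3) by blast
    hence "w - g 1 \<in> S" using e by simp
    moreover have "g 1 \<le> w" using h assms by simp
    ultimately show False using assms unfolding apery_def by simp
  qed
  then show ?thesis using assms unfolding apery_def by simp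
qed

lemma Ap_le: assumes "w \<in> apery S (g 1)" "s \<in> S" "s mod g 1 = w mod g 1"
  shows "w \<le> s \<and> g 1 dvd (s - w)"
proof -
  have "w \<le> s"
  proof (rule ccontr)
    assume "\<not> w \<le> s"
    hence ws: "s < w" by simp
    hence "g 1 dvd (w - s)" using assms(3) mod_eq_dvd_iff_nat[of s w "g 1"] by simp
    then obtain k where k: "w - s = g 1 * k" by blast
    have "w - s > 0" using ws by simp
    hence "g 1 * k \<noteq> 0" using k by simp
    hence "k \<noteq> 0" by auto
    then obtain j where j: "k = Suc j" by (cases k) auto
    have wk: "w = s + g 1 + g 1 * j" using k j ws by simp
    hence "w - g 1 = s + j * g 1" by (simp add: mult.commute)
    hence "w - g 1 \<in> S" using S_add[OF assms(2) mult_m_S] by simp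
    moreover have "g 1 \<le> w" using wk by simp
    ultimately show False using assms(1) unfolding apery_def by simp
  qed
  moreover have "g 1 dvd (s - w)" using assms(3) \<open>w \<le> s\<close> mod_eq_dvd_iff_nat[of w s "g 1"] by simp
  ultimately show ?thesis by simp
qed

lemma Ap_unique: "w \<in> apery S (g 1) \<Longrightarrow> w' \<in> apery S (g 1) \<Longrightarrow> w mod g 1 = w' mod g 1 \<Longrightarrow> w = w'"
  using Ap_le Ap_S by (metis le_antisym)

lemma Ap_exists: assumes "r < g 1" shows "\<exists>w\<in>apery S (g 1). w mod g 1 = r"
proof -
  have "finite (UNIV - S)" using ns unfolding numerical_semigroup_def by simp
  then obtain k where k: "UNIV - S \<subseteq> {..<k}" unfolding finite_nat_set_iff_bounded by (auto simp: subset_eq)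
  have "k \<le> k * g 1" using g1_pos by simp
  hence "k * g 1 + r \<ge> k" using le_trans le_add1 by blast
  hence "k * g 1 + r \<in> S" using k by force
  moreover have "(k * g 1 + r) mod g 1 = r" using assms by simp
  ultimately have ex: "\<exists>x. x \<in> S \<and> x mod g 1 = r" by blast
  define w where "w = (LEAST x. x \<in> S \<and> x mod g 1 = r)"
  have w: "w \<in> S \<and> w mod g 1 = r" unfolding w_def using LeastI_ex[OF ex] .
  have "\<not> (g 1 \<le> w \<and> w - g 1 \<in> S)"
  proof
    assume h: "g 1 \<le> w \<and> w - g 1 \<in> S"
    hence "(w - g 1) mod g 1 = r" using w le_mod_geq[of "g 1" w] by simp
    hence "w - g 1 \<in> S \<and> (w - g 1) mod g 1 = r" using h by simp
    hence "w \<le> w - g 1" unfolding w_def by (rule Least_le)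
    then show False using h g1_pos by linarith
  qed
  then show ?thesis using w unfolding apery_def by auto
qed

definition gv :: "nat \<Rightarrow> nat" where "gv = ext {2..nu} gm"
definition Mx :: nat where "Mx = F gv"
definition K :: nat where "K = Mx * Mx + 1"
definition W :: "(nat \<Rightarrow> nat) \<Rightarrow> nat" where "W l = (\<Sum>i=1..nu. l i * (K + g i ^ 2))"
definition unit :: "nat \<Rightarrow> nat \<Rightarrow> nat \<Rightarrow> nat" where "unit j c = (\<lambda>i. if i = j then c else 0)"

lemma gv_box: "gv \<in> box"
  unfolding gv_def ext_def box_def coeffs_def by auto

lemma box_le_gv: "l \<in> box \<Longrightarrow> l i \<le> gv i"
proof -
  assume l: "l \<in> box"
  have "i \<notin> {2..nu} \<Longrightarrow> l i = 0"
  proof -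
    assume i: "i \<notin> {2..nu}"
    show "l i = 0"
    proof (cases "i = 1")
      case True then show ?thesis using l unfolding box_def by simp
    next
      case False then have "i \<notin> {1..nu}" using i by auto
      then show ?thesis using l coeffs_zero unfolding box_def by blast
    qed
  qed
  then show ?thesis using l unfolding box_def gv_def ext_def by (cases "i \<in> {2..nu}") auto
qed

lemma Mx_Ap: "Mx \<in> apery S (g 1)"
  unfolding Ap_eq Mx_def using gv_box by simp

lemma Ap_le_Mx: "w \<in> apery S (g 1) \<Longrightarrow> w \<le> Mx"
  unfolding Ap_eq Mx_def using box_le_gv F_mono by auto

lemma unit_sum: "j \<in> {1..nu} \<Longrightarrow> (\<Sum>i=1..nu. unit j c i * h i) = c * h j"
proof -
  assume j: "j \<in> {1..nu}"
  have "(\<Sum>i=1..nu. unit j c i * h i) = (\<Sum>i=1..nu. if i = j then c * h j else 0)"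
    unfolding unit_def by (rule sum.cong) auto
  also have "\<dots> = c * h j" using j by (simp add: sum.delta)
  finally show ?thesis .
qed

lemma F_unit': "j \<in> {1..nu} \<Longrightarrow> F (unit j c) = c * g j"
  unfolding F_def by (rule unit_sum)

lemma W_unit: "j \<in> {1..nu} \<Longrightarrow> W (unit j c) = c * (K + g j ^ 2)"
  unfolding W_def by (rule unit_sum)

lemma unit_coeffs': "j \<in> {1..nu} \<Longrightarrow> unit j c \<in> coeffs nu"
  unfolding coeffs_def unit_def by auto

lemma W_add: "W (\<lambda>i. a i + b i) = W a + W b"
  unfolding W_def by (simp add: algebra_simps sum.distrib)

lemma W_diff: assumes "\<And>i. b i \<le> a i" shows "W (\<lambda>i. a i - b i) = W a - W b"
proof -
  have "W a = W (\<lambda>i. (a i - b i) + b i)" using assms by (simp add: le_add_diff_inverse2)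
  also have "\<dots> = W (\<lambda>i. a i - b i) + W b" by (rule W_add)
  finally show ?thesis by simp
qed

lemma W_split: "W l = K * (\<Sum>i=1..nu. l i) + (\<Sum>i=1..nu. l i * g i ^ 2)"
  unfolding W_def by (simp add: algebra_simps sum.distrib sum_distrib_left)

lemma finite_reps: "finite (reps g nu s)"
proof -
  have "reps g nu s \<subseteq> ext {1..nu} ` PiE {1..nu} (\<lambda>_. {0..s})"
  proof
    fix l assume l: "l \<in> reps g nu s"
    hence lc: "l \<in> coeffs nu" and ls: "F l = s" unfolding reps_def F_def by auto
    have "l = ext {1..nu} (restrict l {1..nu})" using lc unfolding ext_def coeffs_def by auto
    moreover have "restrict l {1..nu} \<in> PiE {1..nu} (\<lambda>_. {0..s})" using coeff_le[OF lc] ls by auto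
    ultimately show "l \<in> ext {1..nu} ` PiE {1..nu} (\<lambda>_. {0..s})" by blast
  qed
  moreover have "finite (ext {1..nu} ` PiE {1..nu} (\<lambda>_. {0..s}))" by (simp add: finite_PiE)
  ultimately show ?thesis using finite_subset by blast
qed

lemma reps_iff: "l \<in> reps g nu s \<longleftrightarrow> l \<in> coeffs nu \<and> F l = s"
  unfolding reps_def F_def by auto

lemma gamma_bad: assumes l: "l \<in> {2..nu}" and x: "(gm l + 1) * g l \<in> apery S (g 1)"
  shows "\<not> (ord_s g nu ((gm l + 1) * g l) = gm l + 1 \<and> card (max_reps g nu ((gm l + 1) * g l)) = 1)"
proof
  let ?G = "{h. h * g l \<in> apery S (g 1) \<and> ord_s g nu (h * g l) = h \<and> card (max_reps g nu (h * g l)) = 1}"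
  assume h: "ord_s g nu ((gm l + 1) * g l) = gm l + 1 \<and> card (max_reps g nu ((gm l + 1) * g l)) = 1"
  have gl: "g l > 0" using g_pos l by auto
  have "?G \<subseteq> {..Mx}"
  proof
    fix h assume "h \<in> ?G"
    hence "h * g l \<le> Mx" using Ap_le_Mx by blast
    moreover have "h \<le> h * g l" using gl by simp
    ultimately have "h \<le> Mx" by (rule le_trans[rotated])
    then show "h \<in> {..Mx}" by simp
  qed
  hence fin: "finite ?G" using finite_subset by blast
  have "gm l + 1 \<in> ?G" using h x by simp
  hence "gm l + 1 \<le> Max ?G" using Max_ge[OF fin] by blast
  moreover have "gm l = Max ?G" unfolding gamma_def by simp
  ultimately show False by simp
qed

lemma sum_unit_only: assumes "l \<in> {1..nu}" "\<And>i. i \<in> {1..nu} \<Longrightarrow> i \<noteq> l \<Longrightarrow> d i = 0"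
  shows "(\<Sum>i=1..nu. d i) = d l"
proof -
  have "(\<Sum>i=1..nu. d i) = (\<Sum>i=1..nu. if i = l then d l else 0)"
    by (rule sum.cong) (use assms in auto)
  also have "\<dots> = d l" using assms by (simp add: sum.delta)
  finally show ?thesis .
qed

lemma better_rep: assumes l: "l \<in> {2..nu}" and x: "(gm l + 1) * g l \<in> apery S (g 1)"
  shows "\<exists>d\<in>coeffs nu. F d = (gm l + 1) * g l \<and> W d > W (unit l (gm l + 1))"
proof -
  let ?x = "(gm l + 1) * g l"
  let ?e = "unit l (gm l + 1)"
  let ?T = "(\<lambda>d. \<Sum>i=1..nu. d i) ` reps g nu ?x"
  have l1: "l \<in> {1..nu}" using l by auto
  have e: "?e \<in> reps g nu ?x" using reps_iff unit_coeffs'[OF l1] F_unit'[OF l1] by simp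
  have esum: "(\<Sum>i=1..nu. ?e i) = gm l + 1" using unit_sum[OF l1, of "gm l + 1" "\<lambda>_. 1"] by simp
  have finT: "finite ?T" using finite_reps by simp
  have neT: "?T \<noteq> {}" using e by blast
  have ordx: "ord_s g nu ?x = Max ?T" unfolding ord_s_def by simp
  have ordge: "ord_s g nu ?x \<ge> gm l + 1" unfolding ordx using e esum finT
    by (metis (no_types, lifting) Max_ge image_eqI)
  have xle: "?x \<le> Mx" using Ap_le_Mx x by blast
  have gle: "g l \<le> ?x" by simp
  have Kbig: "(gm l + 1) * g l ^ 2 < K"
  proof -
    have "(gm l + 1) * g l ^ 2 = ?x * g l" by (simp only: power2_eq_square mult.assoc)
    also have "\<dots> \<le> Mx * Mx" using xle gle by (meson le_trans mult_le_mono)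
    finally show ?thesis unfolding K_def by simp
  qed
  have We: "W ?e = (gm l + 1) * (K + g l ^ 2)" by (rule W_unit[OF l1])
  show ?thesis
  proof (cases "ord_s g nu ?x = gm l + 1")
    case False
    hence ogt: "ord_s g nu ?x \<ge> gm l + 2" using ordge by simp
    obtain d where d: "d \<in> reps g nu ?x" and ds: "(\<Sum>i=1..nu. d i) = ord_s g nu ?x"
      using Max_in[OF finT neT] unfolding ordx by auto
    have "W ?e < K * (gm l + 2)" using We Kbig by (simp add: algebra_simps)
    also have "\<dots> \<le> K * (\<Sum>i=1..nu. d i)" using ogt ds mult_le_mono2 by presburger
    also have "\<dots> \<le> W d" unfolding W_split by simp
    finally show ?thesis using d reps_iff by blast
  next
    case True
    hence c1: "card (max_reps g nu ?x) \<noteq> 1" using gamma_bad[OF l x] by simp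
    have emax: "?e \<in> max_reps g nu ?x" unfolding max_reps_def using e esum True by simp
    have finmr: "finite (max_reps g nu ?x)"
      using finite_reps unfolding max_reps_def by simp
    obtain d where dmr: "d \<in> max_reps g nu ?x" and dne: "d \<noteq> ?e"
    proof (rule ccontr)
      assume "\<not> thesis"
      hence "\<forall>d\<in>max_reps g nu ?x. d = ?e" using that by blast
      hence "max_reps g nu ?x = {?e}" using emax by blast
      then show False using c1 by simp
    qed
    have d: "d \<in> reps g nu ?x" and ds: "(\<Sum>i=1..nu. d i) = gm l + 1"
      using dmr True unfolding max_reps_def by auto
    have dc: "d \<in> coeffs nu" and dF: "F d = ?x" using d reps_iff by auto
    obtain i where i: "i \<in> {1..nu}" "i \<noteq> l" "d i > 0"
    proof (rule ccontr)
      assume "\<not> thesis"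
      hence z: "\<And>i. i \<in> {1..nu} \<Longrightarrow> i \<noteq> l \<Longrightarrow> d i = 0" using that by blast
      have "d l = gm l + 1" using sum_unit_only[OF l1 z] ds by simp
      hence "d = ?e" using z coeffs_zero[OF dc] unfolding unit_def by fastforce
      then show False using dne by simp
    qed
    have pos: "0 < (\<Sum>j=1..nu. int (d j) * (int (g j) - int (g l))^2)"
    proof (rule sum_pos2[OF _ i(1)])
      show "finite {1..nu}" by simp
      have "g i \<noteq> g l" using g_inj[OF i(1) l1 i(2)] .
      hence "(int (g i) - int (g l))^2 > 0" by simp
      thus "0 < int (d i) * (int (g i) - int (g l))^2" using i(3) by simp
      show "\<And>j. j \<in> {1..nu} \<Longrightarrow> 0 \<le> int (d j) * (int (g j) - int (g l))^2" by simp
    qed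
    have expand: "(\<Sum>j=1..nu. int (d j) * (int (g j) - int (g l))^2)
       = int (\<Sum>j=1..nu. d j * g j ^ 2) - 2 * int (g l) * int (F d) + int (g l)^2 * int (\<Sum>j=1..nu. d j)"
      unfolding F_def by (simp add: power2_eq_square algebra_simps sum.distrib sum_subtractf sum_distrib_left)
    have "int (\<Sum>j=1..nu. d j * g j ^ 2) > int ((gm l + 1) * g l ^ 2)"
      using pos unfolding expand dF ds by (simp add: power2_eq_square algebra_simps)
    hence phi: "(\<Sum>j=1..nu. d j * g j ^ 2) > (gm l + 1) * g l ^ 2" by linarith
    have "W d = K * (gm l + 1) + (\<Sum>j=1..nu. d j * g j ^ 2)" unfolding W_split ds by simp
    hence "W d > W ?e" using We phi by (simp add: algebra_simps)
    then show ?thesis using dc dF by blast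
  qed
qed

lemma max_is_gv: assumes r: "r \<in> coeffs nu" "F r = Mx"
  and mx: "\<And>t. t \<in> coeffs nu \<Longrightarrow> F t = Mx \<Longrightarrow> W t \<le> W r"
  shows "r = gv"
proof -
  have n1: "1 \<in> {1..nu}" using nu_pos by simp
  have r1: "r 1 = 0"
  proof (rule ccontr)
    assume "r 1 \<noteq> 0"
    hence le: "\<And>i. unit 1 1 i \<le> r i" unfolding unit_def by auto
    have "F (\<lambda>i. r i - unit 1 1 i) = Mx - g 1" using F_diff[OF le] F_unit'[OF n1] r by simp
    hence "Mx - g 1 \<in> S" using F_S[OF coeffs_diff[OF r(1), of "unit 1 1"]] by simp
    moreover have "F (unit 1 1) \<le> F r" by (rule F_mono) (rule le)
    hence "g 1 \<le> Mx" using F_unit'[OF n1] r by simp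
    ultimately show False using Mx_Ap unfolding apery_def by simp
  qed
  have rl: "r l \<le> gm l" if l: "l \<in> {2..nu}" for l
  proof (rule ccontr)
    assume "\<not> r l \<le> gm l"
    hence le: "\<And>i. unit l (gm l + 1) i \<le> r i" unfolding unit_def by auto
    have l1: "l \<in> {1..nu}" using l by auto
    let ?e = "unit l (gm l + 1)"
    let ?x = "(gm l + 1) * g l"
    have Fre: "F (\<lambda>i. r i - ?e i) = Mx - ?x" using F_diff[OF le] F_unit'[OF l1] r by simp
    have "F ?e \<le> F r" by (rule F_mono) (rule le)
    hence xle: "?x \<le> Mx" using F_unit'[OF l1] r by simp
    have xS: "?x \<in> S" using F_S[OF unit_coeffs'[OF l1, of "gm l + 1"]] F_unit'[OF l1, of "gm l + 1"] by simp
    have rS: "Mx - ?x \<in> S" using F_S[OF coeffs_diff[OF r(1), of ?e]] Fre by simp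
    have xAp: "?x \<in> apery S (g 1)" by (rule Ap_div[OF Mx_Ap xS rS]) (use xle in simp)
    obtain d where d: "d \<in> coeffs nu" "F d = ?x" "W d > W ?e" using better_rep[OF l xAp] by blast
    let ?r' = "\<lambda>i. (r i - ?e i) + d i"
    have c': "?r' \<in> coeffs nu" using coeffs_add[OF coeffs_diff[OF r(1)] d(1)] .
    have "F ?r' = Mx" using F_add Fre d(2) xle by simp
    hence "W ?r' \<le> W r" using mx c' by blast
    moreover have req: "(\<lambda>i. (r i - ?e i) + ?e i) = r" using le by (simp add: fun_eq_iff)
    have "W r = W (\<lambda>i. r i - ?e i) + W ?e" using W_add[of "\<lambda>i. r i - ?e i" ?e] req by simp
    moreover have "W ?r' = W (\<lambda>i. r i - ?e i) + W d" by (rule W_add)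
    ultimately show False using d(3) by linarith
  qed
  have lei: "r i \<le> gv i" for i
  proof (cases "i \<in> {2..nu}")
    case True then show ?thesis using rl unfolding gv_def ext_def by simp
  next
    case False
    hence "i = 1 \<or> i \<notin> {1..nu}" by auto
    then show ?thesis using r1 coeffs_zero[OF r(1)] by auto
  qed
  show "r = gv"
  proof (rule ccontr)
    assume "r \<noteq> gv"
    then obtain i where i: "r i \<noteq> gv i" by blast
    hence lt: "r i < gv i" using lei[of i] by simp
    hence i2: "i \<in> {1..nu}" unfolding gv_def ext_def by (auto split: if_splits)
    have "F r < F gv" unfolding F_def
    proof (rule sum_strict_mono_ex1)
      show "finite {1..nu}" by simp
      show "\<forall>j\<in>{1..nu}. r j * g j \<le> gv j * g j" using lei by (simp add: mult_le_mono1)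
      show "\<exists>j\<in>{1..nu}. r j * g j < gv j * g j" using i2 lt g_pos[OF i2] by auto
    qed
    then show False using r unfolding Mx_def by simp
  qed
qed

lemma W_strict: assumes t: "t \<in> coeffs nu" "F t = Mx" "t \<noteq> gv" shows "W t < W gv"
proof -
  let ?R = "reps g nu Mx"
  have fin: "finite (W ` ?R)" using finite_reps by simp
  have gvR: "gv \<in> ?R" using reps_iff gv_box box_coeffs Mx_def by simp
  hence ne: "W ` ?R \<noteq> {}" by blast
  obtain r where r: "r \<in> ?R" "W r = Max (W ` ?R)" using Max_in[OF fin ne] by auto
  have mx: "\<And>t. t \<in> coeffs nu \<Longrightarrow> F t = Mx \<Longrightarrow> W t \<le> W r"
    using r(2) Max_ge[OF fin] reps_iff by auto
  have "r = gv" using max_is_gv[of r] r(1) reps_iff mx by auto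
  have "W t \<le> W gv" using mx t \<open>r = gv\<close> by auto
  moreover have "W t \<noteq> W gv"
  proof
    assume "W t = W gv"
    hence "\<And>s. s \<in> coeffs nu \<Longrightarrow> F s = Mx \<Longrightarrow> W s \<le> W t" using mx \<open>r = gv\<close> by auto
    hence "t = gv" using max_is_gv t by blast
    then show False using t by simp
  qed
  ultimately show ?thesis by simp
qed

lemma box_inj: assumes a: "a \<in> box" and b: "b \<in> box" and e: "F a = F b" shows "a = b"
proof -
  let ?t = "\<lambda>i. (gv i - a i) + b i"
  let ?t' = "\<lambda>i. (gv i - b i) + a i"
  have la: "\<And>i. a i \<le> gv i" using box_le_gv a by blast
  have lb: "\<And>i. b i \<le> gv i" using box_le_gv b by blast
  have gvc: "gv \<in> coeffs nu" using gv_box box_coeffs by blast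
  have ct: "?t \<in> coeffs nu" using coeffs_add[OF coeffs_diff[OF gvc] box_coeffs[OF b]] .
  have ct': "?t' \<in> coeffs nu" using coeffs_add[OF coeffs_diff[OF gvc] box_coeffs[OF a]] .
  have Fa: "F a \<le> Mx" unfolding Mx_def by (rule F_mono) (rule la)
  have Fb: "F b \<le> Mx" unfolding Mx_def by (rule F_mono) (rule lb)
  have Ft: "F ?t = Mx" using F_add[of "\<lambda>i. gv i - a i" b] F_diff[OF la] e Fa unfolding Mx_def by simp
  have Ft': "F ?t' = Mx" using F_add[of "\<lambda>i. gv i - b i" a] F_diff[OF lb] e Fb unfolding Mx_def by simp
  have sum: "(\<lambda>i. ?t i + ?t' i) = (\<lambda>i. gv i + gv i)"
  proof (rule ext)
    fix i show "?t i + ?t' i = gv i + gv i" using la[of i] lb[of i] by arith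
  qed
  have "W ?t + W ?t' = W gv + W gv" using W_add[of ?t ?t'] W_add[of gv gv] sum by simp
  moreover have "W ?t \<le> W gv" using W_strict[OF ct Ft] by (cases "?t = gv") auto
  moreover have "W ?t' \<le> W gv" using W_strict[OF ct' Ft'] by (cases "?t' = gv") auto
  ultimately have eqW: "W ?t = W gv" by linarith
  have "?t = gv"
  proof (rule ccontr)
    assume "?t \<noteq> gv"
    hence "W ?t < W gv" by (rule W_strict[OF ct Ft])
    then show False using eqW by simp
  qed
  hence h: "\<And>i. gv i - a i + b i = gv i" by metis
  show "a = b"
  proof (rule ext)
    fix i show "a i = b i" using h[of i] la[of i] by arith
  qed
qed

lemma cis_root_pow: fixes e n :: nat assumes e: "e > 0" shows "(cis (2 * pi / e)) ^ n = 1 \<longleftrightarrow> e dvd n"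
proof
  assume h: "cis (2 * pi / e) ^ n = 1"
  hence "cis (real n * (2 * pi / e)) = 1" by (simp add: DeMoivre)
  hence "cos (real n * (2 * pi / e)) = 1" by (metis cis.sel(1) one_complex.sel(1))
  hence "\<exists>k::int. real n * (2 * pi / e) = of_int k * 2 * pi" using cos_one_2pi_int by blast
  then obtain k :: int where k: "real n * (2 * pi / e) = of_int k * 2 * pi" by blast
  have "real n = k * real e" using k e by (simp add: field_simps)
  hence "int n = k * int e" by (metis of_int_eq_iff of_int_mult of_int_of_nat_eq)
  hence "int e dvd int n" by simp
  then show "e dvd n" by simp
next
  assume "e dvd n"
  then obtain k where k: "n = e * k" by blast
  have "cis (2 * pi / e) ^ n = cis (real n * (2 * pi / e))" by (simp add: DeMoivre)
  also have "real n * (2 * pi / e) = 2 * pi * real k" using k e by (simp add: field_simps)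
  also have "cis (2 * pi * real k) = 1" by (rule cis_multiple_2pi) simp
  finally show "cis (2 * pi / e) ^ n = 1" .
qed

lemma pow_mod: assumes "(z::complex) ^ q = 1" shows "z ^ w = z ^ (w mod q)"
proof -
  have "z ^ w = z ^ (q * (w div q) + w mod q)" by simp
  also have "\<dots> = (z ^ q) ^ (w div q) * z ^ (w mod q)" by (simp only: power_add power_mult)
  finally show ?thesis using assms by simp
qed

lemma Ap_bij: "bij_betw (\<lambda>w. w mod g 1) (apery S (g 1)) {..<g 1}"
proof (rule bij_betwI')
  show "\<And>x y. x \<in> apery S (g 1) \<Longrightarrow> y \<in> apery S (g 1) \<Longrightarrow> (x mod g 1 = y mod g 1) = (x = y)"
    using Ap_unique by blast
  show "\<And>x. x \<in> apery S (g 1) \<Longrightarrow> x mod g 1 \<in> {..<g 1}" using g1_pos by simp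
  show "\<And>y. y \<in> {..<g 1} \<Longrightarrow> \<exists>x\<in>apery S (g 1). y = x mod g 1" using Ap_exists by force
qed

lemma Ap_sum_res: assumes "(z::complex) ^ g 1 = 1"
  shows "(\<Sum>w\<in>apery S (g 1). z ^ w) = (\<Sum>r<g 1. z ^ r)"
proof -
  have "(\<Sum>w\<in>apery S (g 1). z ^ w) = (\<Sum>w\<in>apery S (g 1). z ^ (w mod g 1))"
    using pow_mod[OF assms] by simp
  also have "\<dots> = (\<Sum>r<g 1. z ^ r)"
    by (rule sum.reindex_bij_betw[OF Ap_bij, of "\<lambda>r. z ^ r"])
  finally show ?thesis .
qed

lemma Ap_sum_prod: "(\<Sum>w\<in>apery S (g 1). (z::complex) ^ w) = (\<Prod>i\<in>{2..nu}. \<Sum>h\<in>{0..gm i}. z ^ (h * g i))"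
proof -
  let ?I = "{2..nu}"
  have inj: "inj_on F box" using box_inj by (meson inj_onI)
  have "(\<Sum>w\<in>apery S (g 1). z ^ w) = (\<Sum>l\<in>box. z ^ F l)"
    unfolding Ap_eq by (rule sum.reindex[OF inj, unfolded comp_def])
  also have "\<dots> = (\<Sum>p\<in>PiE ?I (\<lambda>i. {0..gm i}). z ^ F (ext ?I p))"
    unfolding box_eq_boxI boxI_eq[OF order_refl] by (rule sum.reindex[OF ext_inj, unfolded comp_def])
  also have "\<dots> = (\<Sum>p\<in>PiE ?I (\<lambda>i. {0..gm i}). \<Prod>i\<in>?I. z ^ (p i * g i))"
  proof (rule sum.cong[OF refl])
    fix p
    have "F (ext ?I p) = (\<Sum>i\<in>?I. ext ?I p i * g i)" by (rule F_box) (simp add: ext_def)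
    also have "\<dots> = (\<Sum>i\<in>?I. p i * g i)" by (rule sum.cong) (auto simp: ext_def)
    finally show "z ^ F (ext ?I p) = (\<Prod>i\<in>?I. z ^ (p i * g i))" by (simp add: power_sum)
  qed
  also have "\<dots> = (\<Prod>i\<in>?I. \<Sum>h\<in>{0..gm i}. z ^ (h * g i))"
    by (rule prod_sum_PiE[symmetric]) auto
  finally show ?thesis .
qed

lemma char_step: assumes e2: "e \<ge> 2" and eg1: "e dvd g 1" and C: "C \<subseteq> {2..nu}"
  and eC: "\<And>c. c \<in> C \<Longrightarrow> e dvd g c"
  shows "\<exists>j\<in>{2..nu} - C. e dvd (gm j + 1) * g j"
proof -
  define z where "z = cis (2 * pi / e)"
  have e0: "e > 0" using e2 by simp
  have zp: "\<And>n. z ^ n = 1 \<longleftrightarrow> e dvd n" unfolding z_def using cis_root_pow[OF e0] .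
  have z1: "z \<noteq> 1" using zp[of 1] e2 by auto
  have zg1: "z ^ g 1 = 1" using zp eg1 by simp
  have "(\<Sum>r<g 1. z ^ r) = (z ^ g 1 - 1) / (z - 1)" by (rule geometric_sum[OF z1])
  hence "(\<Sum>r<g 1. z ^ r) = 0" using zg1 by simp
  hence "(\<Prod>i\<in>{2..nu}. \<Sum>h\<in>{0..gm i}. z ^ (h * g i)) = 0"
    using Ap_sum_res[OF zg1] Ap_sum_prod by simp
  then obtain j where j: "j \<in> {2..nu}" and sj: "(\<Sum>h\<in>{0..gm j}. z ^ (h * g j)) = 0"
    by auto
  have rw: "(\<Sum>h\<in>{0..gm j}. z ^ (h * g j)) = (\<Sum>h<gm j + 1. (z ^ g j) ^ h)"
    by (rule sum.reindex_bij_witness[of _ id id]) (auto simp: power_mult[symmetric] mult.commute)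
  have q1: "z ^ g j \<noteq> 1"
  proof
    assume "z ^ g j = 1"
    hence "(\<Sum>h<gm j + 1. (z ^ g j) ^ h) = of_nat (gm j + 1)" by simp
    then show False using sj rw by (metis of_nat_eq_0_iff add_is_0 one_neq_zero)
  qed
  have "(\<Sum>h<gm j + 1. (z ^ g j) ^ h) = ((z ^ g j) ^ (gm j + 1) - 1) / (z ^ g j - 1)"
    by (rule geometric_sum[OF q1])
  hence "(z ^ g j) ^ (gm j + 1) = 1" using sj rw q1 by (simp add: divide_eq_0_iff)
  hence "z ^ (g j * (gm j + 1)) = 1" by (simp only: power_mult)
  hence "z ^ ((gm j + 1) * g j) = 1" by (simp only: mult.commute)
  hence dv: "e dvd (gm j + 1) * g j" using zp by simp
  have "j \<notin> C" using q1 eC zp by blast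
  then show ?thesis using j dv by blast
qed

definition DC :: "nat set \<Rightarrow> nat" where "DC C = (\<Prod>c\<in>C. gm c + 1)"
definition Inv :: "nat set \<Rightarrow> bool" where
  "Inv C \<longleftrightarrow> DC C dvd g 1 \<and> (\<forall>c\<in>C. (g 1 div DC C) dvd g c)"

lemma boxI_box: "boxI C \<subseteq> box" unfolding boxI_def by auto

lemma F_boxI_dvd: assumes C: "C \<subseteq> {2..nu}" and l: "l \<in> boxI C" and eC: "\<And>c. c \<in> C \<Longrightarrow> e dvd g c"
  shows "e dvd F l"
proof -
  have l1: "l 1 = 0" using l unfolding boxI_def box_def by simp
  have "F l = (\<Sum>i=2..nu. l i * g i)" using F_box[of l] l1 by simp
  moreover have "e dvd (\<Sum>i=2..nu. l i * g i)"
  proof (rule dvd_sum)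
    fix i assume "i \<in> {2..nu}"
    show "e dvd l i * g i"
    proof (cases "i \<in> C")
      case True then show ?thesis using eC by simp
    next
      case False then have "l i = 0" using l unfolding boxI_def by simp
      then show ?thesis by simp
    qed
  qed
  ultimately show ?thesis by simp
qed

lemma res_cover: assumes C: "C \<subseteq> {2..nu}" and inv: "Inv C" and y: "y \<in> S"
  and ey: "(g 1 div DC C) dvd y"
  shows "\<exists>\<mu>\<in>boxI C. \<exists>q. y = F \<mu> + q * g 1"
proof -
  let ?e = "g 1 div DC C"
  let ?D = "DC C"
  have gDe: "g 1 = ?D * ?e" using inv unfolding Inv_def by simp
  have e0: "?e > 0"
  proof (rule ccontr)
    assume "\<not> ?e > 0" hence "?e = 0" by simp
    hence "g 1 = 0" using gDe by simp
    thus False using g1_pos by simp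
  qed
  have eC: "\<And>c. c \<in> C \<Longrightarrow> ?e dvd g c" using inv unfolding Inv_def by blast
  have eg1: "?e dvd g 1" by (rule dvd_triv_right[of ?e ?D, folded gDe])
  let ?R = "(\<lambda>l. F l mod g 1) ` boxI C"
  let ?T = "(\<lambda>k. ?e * k) ` {..<?D}"
  have RT: "?R \<subseteq> ?T"
  proof
    fix r assume "r \<in> ?R"
    then obtain l where l: "l \<in> boxI C" and r: "r = F l mod g 1" by blast
    have "?e dvd r" unfolding r using dvd_mod[OF F_boxI_dvd[OF C l eC] eg1] .
    then obtain k where k: "r = ?e * k" by blast
    have "r < g 1" unfolding r using g1_pos by simp
    hence "?e * k < ?e * ?D" using k gDe by (simp add: mult.commute)
    hence "k < ?D" using e0 by simp
    then show "r \<in> ?T" using k by blast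
  qed
  have injR: "inj_on (\<lambda>l. F l mod g 1) (boxI C)"
  proof (rule inj_onI)
    fix a b assume a: "a \<in> boxI C" and b: "b \<in> boxI C" and e: "F a mod g 1 = F b mod g 1"
    have ab: "a \<in> box" "b \<in> box" using a b boxI_box by auto
    have "F a = F b" using Ap_unique[OF _ _ e] ab Ap_eq by blast
    then show "a = b" using box_inj ab by blast
  qed
  have cR: "card ?R = ?D" using card_image[OF injR] card_boxI[OF C] unfolding DC_def by simp
  have cT: "card ?T = ?D" using card_image[of "\<lambda>k. ?e * k" "{..<?D}"] e0 by (simp add: inj_on_def)
  have "?R = ?T" by (rule card_subset_eq) (use RT cR cT in auto)
  moreover have "y mod g 1 \<in> ?T"
  proof -
    have "?e dvd y mod g 1" using dvd_mod[OF ey eg1] .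
    then obtain k where k: "y mod g 1 = ?e * k" by blast
    have "y mod g 1 < g 1" using g1_pos by simp
    hence "?e * k < ?e * ?D" using k gDe by (simp add: mult.commute)
    hence "k < ?D" using e0 by simp
    then show ?thesis using k by blast
  qed
  ultimately obtain \<mu> where mu: "\<mu> \<in> boxI C" and mm: "F \<mu> mod g 1 = y mod g 1" by force
  have muAp: "F \<mu> \<in> apery S (g 1)" using mu boxI_box Ap_eq by blast
  have "F \<mu> \<le> y \<and> g 1 dvd (y - F \<mu>)" using Ap_le[OF muAp y] mm by simp
  then obtain q where "y - F \<mu> = g 1 * q" "F \<mu> \<le> y" by blast
  hence "y = F \<mu> + q * g 1" by (simp add: mult.commute)
  then show ?thesis using mu by blast
qed

lemma order_step: assumes C: "C \<subseteq> {2..nu}" and inv: "Inv C" and j: "j \<in> {2..nu} - C"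
  and ej: "(g 1 div DC C) dvd (gm j + 1) * g j"
  shows "Inv (insert j C)"
proof -
  let ?e = "g 1 div DC C"
  let ?D = "DC C"
  have gDe: "g 1 = ?D * ?e" using inv unfolding Inv_def by simp
  have e0: "?e > 0"
  proof (rule ccontr)
    assume "\<not> ?e > 0" hence "?e = 0" by simp
    hence "g 1 = 0" using gDe by simp
    thus False using g1_pos by simp
  qed
  have eC: "\<And>c. c \<in> C \<Longrightarrow> ?e dvd g c" using inv unfolding Inv_def by blast
  have j1: "j \<in> {1..nu}" using j by auto
  have jC: "j \<notin> C" using j by simp
  have nodvd: "\<not> ?e dvd t * g j" if t: "1 \<le> t" "t \<le> gm j" for t
  proof
    assume dv: "?e dvd t * g j"
    have tS: "t * g j \<in> S" using F_S[OF unit_coeffs'[OF j1, of t]] F_unit'[OF j1, of t] by simp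
    obtain \<mu> q where mu: "\<mu> \<in> boxI C" and eq: "t * g j = F \<mu> + q * g 1"
      using res_cover[OF C inv tS dv] by blast
    have ub: "unit j t \<in> box" using t j unfolding box_def unit_def coeffs_def by auto
    have uAp: "t * g j \<in> apery S (g 1)" using ub Ap_eq F_unit'[OF j1, of t] by force
    have muAp: "F \<mu> \<in> apery S (g 1)" using mu boxI_box Ap_eq by blast
    have "F \<mu> mod g 1 = (t * g j) mod g 1" using eq by simp
    hence "F \<mu> = t * g j" using Ap_unique[OF muAp uAp] by simp
    hence "F \<mu> = F (unit j t)" using F_unit'[OF j1] by simp
    hence "\<mu> = unit j t" using box_inj mu boxI_box ub by blast
    hence "\<mu> j = t" unfolding unit_def by simp
    moreover have "\<mu> j = 0" using mu jC unfolding boxI_def by simp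
    ultimately show False using t by simp
  qed
  define d where "d = gcd ?e (g j)"
  have d0: "d > 0" unfolding d_def using e0 by simp
  obtain a where a: "?e = d * a" unfolding d_def by (meson gcd_dvd1 dvdE)
  obtain b where b: "g j = d * b" unfolding d_def by (meson gcd_dvd2 dvdE)
  have adiv: "a = ?e div d" using a d0 by simp
  have bdiv: "b = g j div d" using b d0 by simp
  have cop: "coprime a b" unfolding adiv bdiv d_def by (rule div_gcd_coprime) (use e0 in simp)
  have a0: "a > 0" using a e0 by (cases a) auto
  have "?e dvd a * g j" using a b by (simp add: algebra_simps)
  hence age: "\<not> a \<le> gm j" using nodvd[of a] a0 by auto
  have "d * a dvd d * ((gm j + 1) * b)" using ej a b by (simp add: algebra_simps)
  hence "a dvd (gm j + 1) * b" using d0 by simp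
  hence "a dvd gm j + 1" using cop coprime_dvd_mult_left_iff by blast
  hence "a \<le> gm j + 1" by (simp add: dvd_imp_le)
  hence aeq: "a = gm j + 1" using age by simp
  have finC: "finite C" using C finite_subset by blast
  have D': "DC (insert j C) = ?D * (gm j + 1)" unfolding DC_def using finC jC by simp
  have g1': "g 1 = DC (insert j C) * d" using gDe a aeq D' by (simp add: algebra_simps)
  have ediv: "g 1 div DC (insert j C) = d"
  proof -
    have "DC (insert j C) > 0" unfolding DC_def by (simp add: finC)
    then show ?thesis using g1' by simp
  qed
  have "\<forall>c\<in>insert j C. d dvd g c"
  proof
    fix c assume "c \<in> insert j C"
    then show "d dvd g c"
    proof
      assume "c = j" then show ?thesis using b by simp
    next
      assume "c \<in> C" then have "?e dvd g c" by (rule eC)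
      moreover have "d dvd ?e" using a by simp
      ultimately show ?thesis using dvd_trans by blast
    qed
  qed
  then show ?thesis unfolding Inv_def ediv using g1' by simp
qed

lemma Inv_e_pos: "Inv C \<Longrightarrow> g 1 div DC C > 0"
proof (rule ccontr)
  assume inv: "Inv C" and "\<not> g 1 div DC C > 0"
  hence "g 1 div DC C = 0" by simp
  moreover have "g 1 = DC C * (g 1 div DC C)" using inv unfolding Inv_def by simp
  ultimately have "g 1 = 0" by simp
  thus False using g1_pos by simp
qed

lemma find_next: assumes C: "C \<subseteq> {2..nu}" and inv: "Inv C" and ne: "{2..nu} - C \<noteq> {}"
  shows "\<exists>j\<in>{2..nu} - C. (g 1 div DC C) dvd (gm j + 1) * g j"
proof (cases "g 1 div DC C \<ge> 2")
  case True
  show ?thesis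
  proof (rule char_step[OF True _ C])
    have gDe: "g 1 = DC C * (g 1 div DC C)" using inv unfolding Inv_def by simp
    show "g 1 div DC C dvd g 1" by (rule dvd_triv_right[of "g 1 div DC C" "DC C", folded gDe])
    show "\<And>c. c \<in> C \<Longrightarrow> g 1 div DC C dvd g c" using inv unfolding Inv_def by blast
  qed
next
  case False
  hence "g 1 div DC C = 1" using Inv_e_pos[OF inv] by simp
  then show ?thesis using ne by auto
qed

lemma seq: "k + 1 \<le> nu \<Longrightarrow> (\<exists>\<sigma>. inj_on \<sigma> {2..k+1} \<and> \<sigma> ` {2..k+1} \<subseteq> {2..nu} \<and> Inv (\<sigma> ` {2..k+1}) \<and>
   (\<forall>i\<in>{2..k+1}. \<exists>l\<in>coeffs nu. (gm (\<sigma> i) + 1) * g (\<sigma> i) = F l \<and>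
        (\<forall>t. t \<noteq> 1 \<and> t \<notin> \<sigma> ` {2..<i} \<longrightarrow> l t = 0)))"
proof (induction k)
  case 0
  have "Inv {}" unfolding Inv_def DC_def by simp
  then show ?case by (rule_tac x=id in exI) simp
next
  case (Suc k)
  then obtain \<sigma> where inj: "inj_on \<sigma> {2..k+1}" and im: "\<sigma> ` {2..k+1} \<subseteq> {2..nu}"
    and inv: "Inv (\<sigma> ` {2..k+1})"
    and P: "\<forall>i\<in>{2..k+1}. \<exists>l\<in>coeffs nu. (gm (\<sigma> i) + 1) * g (\<sigma> i) = F l \<and>
        (\<forall>t. t \<noteq> 1 \<and> t \<notin> \<sigma> ` {2..<i} \<longrightarrow> l t = 0)" by auto
  let ?C = "\<sigma> ` {2..k+1}"
  have cC: "card ?C = k" using card_image[OF inj] by simp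
  have cA: "card {2..nu} = nu - 1" by simp
  have "{2..nu} - ?C \<noteq> {}"
  proof
    assume "{2..nu} - ?C = {}"
    hence "{2..nu} \<subseteq> ?C" by blast
    hence "card {2..nu} \<le> card ?C" by (rule card_mono[rotated]) simp
    then show False using cC cA Suc.prems by simp
  qed
  then obtain j where j: "j \<in> {2..nu} - ?C" and ej: "(g 1 div DC ?C) dvd (gm j + 1) * g j"
    using find_next[OF im inv] by blast
  have j1: "j \<in> {1..nu}" using j by auto
  have xS: "(gm j + 1) * g j \<in> S" using F_S[OF unit_coeffs'[OF j1, of "gm j + 1"]] F_unit'[OF j1, of "gm j + 1"] by simp
  obtain \<mu> q where mu: "\<mu> \<in> boxI ?C" and xe: "(gm j + 1) * g j = F \<mu> + q * g 1"
    using res_cover[OF im inv xS ej] by blast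
  have n1: "1 \<in> {1..nu}" using Suc.prems by simp
  define lam where "lam = (\<lambda>t. \<mu> t + unit 1 q t)"
  have lamc: "lam \<in> coeffs nu" unfolding lam_def
    using coeffs_add[OF box_coeffs unit_coeffs'[OF n1]] mu boxI_box by blast
  have lamF: "(gm j + 1) * g j = F lam" unfolding lam_def using F_add F_unit'[OF n1] xe by simp
  have lamz: "\<forall>t. t \<noteq> 1 \<and> t \<notin> ?C \<longrightarrow> lam t = 0" using mu unfolding lam_def unit_def boxI_def by simp
  define \<sigma>' where "\<sigma>' = \<sigma>(k+2 := j)"
  have ks: "{2..Suc k + 1} = insert (k+2) {2..k+1}" by auto
  have eqon: "\<And>i. i \<in> {2..k+1} \<Longrightarrow> \<sigma>' i = \<sigma> i" unfolding \<sigma>'_def by simp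
  have imeq: "\<sigma>' ` {2..k+1} = ?C" by (rule image_cong[OF refl]) (rule eqon)
  have im': "\<sigma>' ` {2..Suc k+1} = insert j ?C" unfolding ks image_insert imeq by (simp add: \<sigma>'_def)
  have injA: "inj_on \<sigma>' {2..k+1}"
  proof -
    have "inj_on \<sigma>' {2..k+1} = inj_on \<sigma> {2..k+1}" by (rule inj_on_cong) (rule eqon)
    thus ?thesis using inj by simp
  qed
  have nin: "\<sigma>' (k+2) \<notin> \<sigma>' ` {2..k+1}" using j imeq by (simp add: \<sigma>'_def)
  have inj': "inj_on \<sigma>' {2..Suc k+1}"
    unfolding ks using injA nin by simp
  have inv': "Inv (\<sigma>' ` {2..Suc k+1})" unfolding im' by (rule order_step[OF im inv j ej])
  have im'': "\<sigma>' ` {2..Suc k+1} \<subseteq> {2..nu}" unfolding im' using j im by auto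
  have P': "\<forall>i\<in>{2..Suc k+1}. \<exists>l\<in>coeffs nu. (gm (\<sigma>' i) + 1) * g (\<sigma>' i) = F l \<and>
        (\<forall>t. t \<noteq> 1 \<and> t \<notin> \<sigma>' ` {2..<i} \<longrightarrow> l t = 0)"
  proof
    fix i assume i: "i \<in> {2..Suc k+1}"
    show "\<exists>l\<in>coeffs nu. (gm (\<sigma>' i) + 1) * g (\<sigma>' i) = F l \<and>
        (\<forall>t. t \<noteq> 1 \<and> t \<notin> \<sigma>' ` {2..<i} \<longrightarrow> l t = 0)"
    proof (cases "i = k + 2")
      case True
      have "{2..<i} = {2..k+1}" using True by auto
      hence "\<sigma>' ` {2..<i} = ?C" using imeq by simp
      moreover have "\<sigma>' i = j" using True by (simp add: \<sigma>'_def)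
      ultimately show ?thesis using lamc lamF lamz by (intro bexI[of _ lam]) auto
    next
      case False
      hence i': "i \<in> {2..k+1}" using i by auto
      have "\<sigma>' ` {2..<i} = \<sigma> ` {2..<i}" by (rule image_cong[OF refl]) (rule eqon, use i' in auto)
      moreover have "\<sigma>' i = \<sigma> i" using eqon i' by blast
      ultimately show ?thesis using P i' by simp
    qed
  qed
  show ?case using inj' im'' inv' P' by blast
qed

lemma main: "\<exists>lam :: nat \<Rightarrow> nat \<Rightarrow> nat.
           (\<forall>i\<in>{2..nu}. (gamma S g nu i + 1) * g i = (\<Sum>j=1..nu. lam i j * g j)) \<and>
           (\<exists>\<sigma>. bij_betw \<sigma> {1..nu} {1..nu} \<and> \<sigma> 1 = 1 \<and>
                (\<forall>i j. 2 \<le> i \<and> i \<le> j \<and> j \<le> nu \<longrightarrow> lam (\<sigma> i) (\<sigma> j) = 0))"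
proof -
  have k: "(nu - 1) + 1 \<le> nu" using nu_pos by simp
  have kk: "{2..nu - 1 + 1} = {2..nu}" using nu_pos by simp
  obtain \<sigma> where inj: "inj_on \<sigma> {2..nu}" and im: "\<sigma> ` {2..nu} \<subseteq> {2..nu}"
    and P: "\<forall>i\<in>{2..nu}. \<exists>l\<in>coeffs nu. (gm (\<sigma> i) + 1) * g (\<sigma> i) = F l \<and>
        (\<forall>t. t \<noteq> 1 \<and> t \<notin> \<sigma> ` {2..<i} \<longrightarrow> l t = 0)"
    using seq[OF k] unfolding kk by blast
  have imeq: "\<sigma> ` {2..nu} = {2..nu}"
    by (rule card_subset_eq) (use im card_image[OF inj] in auto)
  define Q where "Q = (\<lambda>i l. l \<in> coeffs nu \<and> (gm i + 1) * g i = F l \<and>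
        (\<forall>t. t \<noteq> 1 \<and> t \<notin> \<sigma> ` {2..<inv_into {2..nu} \<sigma> i} \<longrightarrow> l t = 0))"
  define lam where "lam = (\<lambda>i. SOME l. Q i l)"
  have Qs: "Q (\<sigma> k) (lam (\<sigma> k))" if kr: "k \<in> {2..nu}" for k
  proof -
    have iv: "inv_into {2..nu} \<sigma> (\<sigma> k) = k" using inv_into_f_f[OF inj kr] .
    have "\<exists>l. Q (\<sigma> k) l" using P kr unfolding Q_def iv by blast
    then show ?thesis unfolding lam_def by (rule someI_ex)
  qed
  have Q2: "Q i (lam i)" if i: "i \<in> {2..nu}" for i
  proof -
    have "i \<in> \<sigma> ` {2..nu}" using i imeq by simp
    then obtain k where kr: "k \<in> {2..nu}" and ik: "i = \<sigma> k" by blast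
    show ?thesis using Qs[OF kr] ik by simp
  qed
  define \<tau> where "\<tau> = \<sigma>(1 := 1)"
  have teq: "\<And>i. i \<in> {2..nu} \<Longrightarrow> \<tau> i = \<sigma> i" unfolding \<tau>_def by auto
  have tim: "\<tau> ` {2..nu} = {2..nu}" using imeq teq by (metis image_cong)
  have one: "{1..nu} = insert 1 {2..nu}" using nu_pos by auto
  have tinj: "inj_on \<tau> {2..nu}"
  proof -
    have "inj_on \<tau> {2..nu} = inj_on \<sigma> {2..nu}" by (rule inj_on_cong) (rule teq)
    thus ?thesis using inj by simp
  qed
  have bij: "bij_betw \<tau> {1..nu} {1..nu}"
    unfolding bij_betw_def one
  proof
    show "inj_on \<tau> (insert 1 {2..nu})" using tinj tim by (simp add: \<tau>_def)
    show "\<tau> ` insert 1 {2..nu} = insert 1 {2..nu}" unfolding image_insert tim by (simp add: \<tau>_def)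
  qed
  have A: "\<forall>i\<in>{2..nu}. (gamma S g nu i + 1) * g i = (\<Sum>j=1..nu. lam i j * g j)"
    using Q2 unfolding Q_def F_def by blast
  have B: "\<forall>i j. 2 \<le> i \<and> i \<le> j \<and> j \<le> nu \<longrightarrow> lam (\<tau> i) (\<tau> j) = 0"
  proof (intro allI impI)
    fix i j assume h: "2 \<le> i \<and> i \<le> j \<and> j \<le> nu"
    have ir: "i \<in> {2..nu}" and jr: "j \<in> {2..nu}" using h by auto
    have q: "Q (\<sigma> i) (lam (\<sigma> i))" by (rule Qs[OF ir])
    have iv: "inv_into {2..nu} \<sigma> (\<sigma> i) = i" using inv_into_f_f[OF inj ir] .
    have sj: "\<sigma> j \<in> {2..nu}" using jr imeq by blast
    have "\<sigma> j \<notin> \<sigma> ` {2..<i}"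
    proof
      assume "\<sigma> j \<in> \<sigma> ` {2..<i}"
      then obtain k where k: "k \<in> {2..<i}" "\<sigma> j = \<sigma> k" by blast
      have "k \<in> {2..nu}" using k h by auto
      hence "k = j" using inj_onD[OF inj k(2)[symmetric] _ jr] by simp
      then show False using k h by simp
    qed
    hence "lam (\<sigma> i) (\<sigma> j) = 0" using q sj unfolding Q_def iv by auto
    then show "lam (\<tau> i) (\<tau> j) = 0" using teq ir jr by simp
  qed
  have t1: "\<tau> 1 = 1" by (simp add: \<tau>_def)
  show ?thesis using A B bij t1 by blast
qed

end

theorem mainTheorem3:
  fixes S :: "nat set" and g :: "nat \<Rightarrow> nat" and nu :: nat
  assumes "numerical_semigroup S"
    and "min_gens S g nu"
    and "gamma_rectangular S g nu"
  shows "\<exists>lam :: nat \<Rightarrow> nat \<Rightarrow> nat.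
           (\<forall>i\<in>{2..nu}. (gamma S g nu i + 1) * g i = (\<Sum>j=1..nu. lam i j * g j)) \<and>
           (\<exists>\<sigma>. bij_betw \<sigma> {1..nu} {1..nu} \<and> \<sigma> 1 = 1 \<and>
                (\<forall>i j. 2 \<le> i \<and> i \<le> j \<and> j \<le> nu \<longrightarrow> lam (\<sigma> i) (\<sigma> j) = 0))"
proof -
  interpret NS S g nu using assms by unfold_locales
  show ?thesis by (rule main)
qed

end
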